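(* Let $S$ be a semigroup and $a\in S$ an idempotent with $aSa\subseteq\operatorname{Reg}(S)$; let $P=\{x\in Sa: x\,\mathscr L\,ax\}$ and let $\rho$ be the number of $\mathscr R^P$-classes contained in $\widehat R^a_a=\{x\in P: ax\ \mathscr R^{aSa}\ a\}$. Then $$\operatorname{rank}(\mathbb E(Sa))\ge\operatorname{rank}(\mathbb E(aSa))+\rho-1\quad\text{and}\quad \operatorname{idrank}(\mathbb E(Sa))\ge\operatorname{idrank}(\mathbb E(aSa))+\rho-1,$$ with equality in both if $P$ is RI-dominated.
   Context: $\mathbb E(T)$ is the subsemigroup of $T$ generated by its idempotents. $\operatorname{rank}(T)$ is the minimum cardinality of a generating set; for idempotent-generated $T$, $\operatorname{idrank}(T)$ is the minimum cardinality of a generating set consisting of idempotents. $\mathscr R^P$, $\mathscr R^{aSa}$ are Green's $\mathscr R$-relations in $P$ and $aSa$. A semigroup $T$ is RI-dominated if for every $x\in T$ there is a right identity $e$ of $T$ with $x\in eT^1$. *)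

theory Defs
  imports Main
begin

text \<open>The semigroup S is the whole carrier type 'a of class semigroup_mult.
  Subsemigroups and subsets of S are sets of type 'a set.\<close>

definition idem :: "'a::semigroup_mult \<Rightarrow> bool" where
  "idem e \<longleftrightarrow> e * e = e"

definition Reg :: "'a::semigroup_mult set" where
  "Reg = {x. \<exists>y. x * y * x = x}"

inductive_set sgp_gen :: "'a::semigroup_mult set \<Rightarrow> 'a set" for X where
  base: "x \<in> X \<Longrightarrow> x \<in> sgp_gen X"
| mult: "x \<in> sgp_gen X \<Longrightarrow> y \<in> sgp_gen X \<Longrightarrow> x * y \<in> sgp_gen X"

definition Egen :: "'a::semigroup_mult set \<Rightarrow> 'a set" where
  "Egen T = sgp_gen {e \<in> T. idem e}"

definition generates :: "'a::semigroup_mult set \<Rightarrow> 'a set \<Rightarrow> bool" where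
  "generates T X \<longleftrightarrow> X \<subseteq> T \<and> sgp_gen X = T"

text \<open>A generating set of minimum cardinality (the rank is its cardinality).\<close>
definition rank_set :: "'a::semigroup_mult set \<Rightarrow> 'a set" where
  "rank_set T = (SOME X. generates T X \<and>
       (\<forall>Y. generates T Y \<longrightarrow> (card_of X, card_of Y) \<in> ordLeq))"


definition idrank_set :: "'a::semigroup_mult set \<Rightarrow> 'a set" where
  "idrank_set T = (SOME X. generates T X \<and> (\<forall>x\<in>X. idem x) \<and>
       (\<forall>Y. generates T Y \<and> (\<forall>y\<in>Y. idem y) \<longrightarrow> (card_of X, card_of Y) \<in> ordLeq))"


definition greenL :: "'a::semigroup_mult \<Rightarrow> 'a \<Rightarrow> bool" where
  "greenL x y \<longleftrightarrow> insert x (range (\<lambda>s. s * x)) = insert y (range (\<lambda>s. s * y))"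

definition greenR_in :: "'a::semigroup_mult set \<Rightarrow> 'a \<Rightarrow> 'a \<Rightarrow> bool" where
  "greenR_in T x y \<longleftrightarrow> insert x ((\<lambda>t. x * t) ` T) = insert y ((\<lambda>t. y * t) ` T)"

definition R_classes :: "'a::semigroup_mult set \<Rightarrow> 'a set set" where
  "R_classes T = {C. \<exists>x\<in>T. C = {y \<in> T. greenR_in T x y}}"

definition RI_dominated :: "'a::semigroup_mult set \<Rightarrow> bool" where
  "RI_dominated T \<longleftrightarrow> (\<forall>x\<in>T. \<exists>e\<in>T. (\<forall>t\<in>T. t * e = t) \<and> x \<in> insert e ((\<lambda>t. e * t) ` T))"

definition leftmult :: "'a::semigroup_mult \<Rightarrow> 'a set" where
  "leftmult a = range (\<lambda>s. s * a)"

definition sandwich :: "'a::semigroup_mult \<Rightarrow> 'a set" where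
  "sandwich a = range (\<lambda>s. a * s * a)"

end

theory Submission
  imports Defs
begin

lemma sgp_gen_sub: "X \<subseteq> A \<Longrightarrow> (\<And>x y. x \<in> A \<Longrightarrow> y \<in> A \<Longrightarrow> x * y \<in> A) \<Longrightarrow> sgp_gen X \<subseteq> A"
proof
  fix z assume XA: "X \<subseteq> A" and cl: "\<And>x y. x \<in> A \<Longrightarrow> y \<in> A \<Longrightarrow> x * y \<in> A" and z: "z \<in> sgp_gen X"
  from z show "z \<in> A" by (induction z rule: sgp_gen.induct) (use XA cl in auto)
qed

lemma sgp_gen_mono: "X \<subseteq> Y \<Longrightarrow> sgp_gen X \<subseteq> sgp_gen Y"
  by (rule sgp_gen_sub) (auto intro: sgp_gen.intros)

lemma sgp_gen_first:
  "z \<in> sgp_gen X \<Longrightarrow> \<exists>x\<in>X. z = x \<or> (\<exists>q\<in>sgp_gen X. z = x * q)"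
proof (induction z rule: sgp_gen.induct)
  case (base x) then show ?case by auto
next
  case (mult z1 z2)
  from mult.IH(1) obtain x where x: "x \<in> X" "z1 = x \<or> (\<exists>q\<in>sgp_gen X. z1 = x * q)" by blast
  show ?case
  proof (cases "z1 = x")
    case True then show ?thesis using x mult.hyps by auto
  next
    case False
    then obtain q where "q \<in> sgp_gen X" "z1 = x * q" using x by auto
    then show ?thesis using x(1) mult.hyps
      by (metis mult.assoc sgp_gen.mult)
  qed
qed

lemma sgp_gen_closed_eq:
  assumes "T = sgp_gen X" shows "sgp_gen T = T"
proof
  show "sgp_gen T \<subseteq> T" by (rule sgp_gen_sub[OF order_refl]) (use assms sgp_gen.mult in blast)
  show "T \<subseteq> sgp_gen T" by (blast intro: sgp_gen.base)
qed

lemma min_exists: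
  assumes "\<exists>X. Q X"
  shows "\<exists>X. Q X \<and> (\<forall>Y. Q Y \<longrightarrow> (card_of X, card_of Y) \<in> ordLeq)"
proof -
  obtain X0 where "Q X0" using assms by blast
  then have ne: "card_of ` {X. Q X} \<noteq> {}" by blast
  have wo: "\<forall>r \<in> card_of ` {X. Q X}. Well_order r"
  proof
    fix r assume "r \<in> card_of ` {X. Q X}"
    then obtain X where "r = card_of X" by blast
    then show "Well_order r" by (simp add: card_of_Well_order)
  qed
  obtain r where r: "r \<in> card_of ` {X. Q X}" "\<forall>r' \<in> card_of ` {X. Q X}. (r, r') \<in> ordLeq"
    using exists_minim_Well_order[OF ne wo] by blast
  from r(1) obtain X where X: "Q X" "r = card_of X" by blast
  have "\<forall>Y. Q Y \<longrightarrow> (card_of X, card_of Y) \<in> ordLeq"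
  proof (intro allI impI)
    fix Y assume "Q Y"
    then have "card_of Y \<in> card_of ` {X. Q X}" by blast
    then show "(card_of X, card_of Y) \<in> ordLeq" using r(2) X(2) by blast
  qed
  then show ?thesis using X(1) by blast
qed

lemma ins_subR:
  assumes cl: "\<And>p q. p \<in> A \<Longrightarrow> q \<in> A \<Longrightarrow> p * q \<in> A"
    and uv: "u \<in> insert v ((*) v ` A)"
  shows "insert u ((*) u ` A) \<subseteq> insert (v::'a::semigroup_mult) ((*) v ` A)"
proof
  fix z assume "z \<in> insert u ((*) u ` A)"
  then consider (e) "z = u" | (m) p where "p \<in> A" "z = u * p" by blast
  then show "z \<in> insert v ((*) v ` A)"
  proof cases
    case e then show ?thesis using uv by simp
  next
    case m
    from uv consider (e2) "u = v" | (m2) q where "q \<in> A" "u = v * q" by blast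
    then show ?thesis
    proof cases
      case e2 then show ?thesis using m by blast
    next
      case m2
      then have "z = v * (q * p)" using m by (simp add: mult.assoc)
      then show ?thesis using cl m m2 by blast
    qed
  qed
qed

lemma R_intro:
  assumes cl: "\<And>p q. p \<in> A \<Longrightarrow> q \<in> A \<Longrightarrow> p * q \<in> A"
    and "u \<in> insert v ((*) v ` A)" and "v \<in> insert u ((*) u ` A)"
  shows "greenR_in A (u::'a::semigroup_mult) v"
  unfolding greenR_in_def using ins_subR[OF cl assms(2)] ins_subR[OF cl assms(3)] by blast

lemma ins_subL:
  assumes uv: "u \<in> insert v (range (\<lambda>s. s * v))"
  shows "insert u (range (\<lambda>s. s * u)) \<subseteq> insert (v::'a::semigroup_mult) (range (\<lambda>s. s * v))"
proof
  fix z assume "z \<in> insert u (range (\<lambda>s. s * u))"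
  then consider (e) "z = u" | (m) p where "z = p * u" by blast
  then show "z \<in> insert v (range (\<lambda>s. s * v))"
  proof cases
    case e then show ?thesis using uv by simp
  next
    case m
    from uv consider (e2) "u = v" | (m2) q where "u = q * v" by blast
    then show ?thesis
    proof cases
      case e2 then show ?thesis using m by blast
    next
      case m2
      then have "z = (p * q) * v" using m by (simp add: mult.assoc)
      then show ?thesis by blast
    qed
  qed
qed

locale ctx3 =
  fixes a :: "'a::semigroup_mult" and P Rhat Rcls
  assumes a_idem: "idem a"
  and P_def: "P = {x \<in> leftmult a. greenL x (a * x)}"
  and Rhat_def: "Rhat = {x \<in> P. greenR_in (sandwich a) (a * x) a}"
  and Rcls_def: "Rcls = {C \<in> R_classes P. C \<subseteq> Rhat}"
begin

definition cls where "cls x = {y \<in> P. greenR_in P x y}"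

lemma aa: "a * a = a" using a_idem idem_def by blast

lemma aa2: "a * (a * z) = a * z" using aa by (simp add: mult.assoc[symmetric])

lemma L_iff: "x \<in> leftmult a \<longleftrightarrow> x * a = x"
  unfolding leftmult_def
proof
  assume "x \<in> range (\<lambda>s. s * a)"
  then obtain s where "x = s * a" by blast
  then show "x * a = x" by (simp add: mult.assoc aa)
next
  assume h: "x * a = x"
  have "x * a \<in> range (\<lambda>s. s * a)" by blast
  then show "x \<in> range (\<lambda>s. s * a)" using h by simp
qed

lemma M_iff: "x \<in> sandwich a \<longleftrightarrow> a * x = x \<and> x * a = x"
  unfolding sandwich_def
proof
  assume "x \<in> range (\<lambda>s. a * s * a)"
  then obtain s where "x = a * s * a" by auto
  then show "a * x = x \<and> x * a = x" by (metis aa mult.assoc)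
next
  assume "a * x = x \<and> x * a = x"
  then have "x = a * x * a" by simp
  then show "x \<in> range (\<lambda>s. a * s * a)" by blast
qed

lemma aM: "a \<in> sandwich a" using M_iff aa by simp

lemma axM: "x * a = x \<Longrightarrow> a * x \<in> sandwich a"
  using M_iff aa by (metis mult.assoc)

lemma M_mult: "x \<in> sandwich a \<Longrightarrow> y \<in> sandwich a \<Longrightarrow> x * y \<in> sandwich a"
  using M_iff by (metis mult.assoc)

lemma L_mult: "y \<in> leftmult a \<Longrightarrow> x * y \<in> leftmult a"
  using L_iff by (metis mult.assoc)

lemma greenL_intro:
  assumes "y \<in> insert x (range (\<lambda>s. s * x))" "x \<in> insert y (range (\<lambda>s. s * y))"
  shows "greenL x y"
  unfolding greenL_def using ins_subL[OF assms(1)] ins_subL[OF assms(2)] by blast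

lemma P_L: "x \<in> P \<Longrightarrow> x * a = x" using P_def L_iff by auto

lemma P_s: "x \<in> P \<Longrightarrow> \<exists>s. x = s * a * x"
proof -
  assume "x \<in> P"
  then have "greenL x (a * x)" using P_def by auto
  then have "x \<in> insert (a * x) (range (\<lambda>s. s * (a * x)))" unfolding greenL_def by blast
  then show ?thesis by (metis aa insertE mult.assoc rangeE)
qed

lemma P_intro: "x * a = x \<Longrightarrow> x = s * a * x \<Longrightarrow> x \<in> P"
  unfolding P_def using L_iff greenL_intro
  by (metis (no_types, lifting) insertI2 mem_Collect_eq mult.assoc rangeI)

lemma P_mult: "x \<in> P \<Longrightarrow> y \<in> P \<Longrightarrow> x * y \<in> P"
proof -
  assume x: "x \<in> P" and y: "y \<in> P"
  obtain s where "x = s * a * x" using P_s x by blast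
  then have "x * y = (s * a * x) * y" by (rule arg_cong)
  also have "\<dots> = s * a * (x * y)" by (simp add: mult.assoc)
  finally have "x * y = s * a * (x * y)" .
  moreover have "x * y * a = x * y" using P_L y by (simp add: mult.assoc)
  ultimately show ?thesis using P_intro by blast
qed

lemma M_P: "x \<in> sandwich a \<Longrightarrow> x \<in> P"
  using M_iff P_intro aa by (metis mult.assoc)

lemma aP: "a \<in> P" using M_P aM by blast

lemma idem_P: "idem e \<Longrightarrow> e \<in> leftmult a \<Longrightarrow> e \<in> P"
  using P_intro L_iff idem_def by (metis mult.assoc)

lemma R_M: assumes "z \<in> sandwich a"
  shows "greenR_in (sandwich a) z a \<longleftrightarrow> (\<exists>t\<in>sandwich a. z * t = a)"
proof
  assume "greenR_in (sandwich a) z a"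
  then have "a \<in> insert z ((\<lambda>t. z * t) ` sandwich a)" unfolding greenR_in_def by blast
  then show "\<exists>t\<in>sandwich a. z * t = a"
    using assms aM M_iff by auto
next
  assume "\<exists>t\<in>sandwich a. z * t = a"
  then obtain t where t: "t \<in> sandwich a" "z * t = a" by blast
  have zz: "a * z = z" using assms M_iff by auto
  have 1: "z \<in> insert a ((*) a ` sandwich a)" using zz assms by (metis image_eqI insertI2)
  have 2: "a \<in> insert z ((*) z ` sandwich a)" using t by (metis image_eqI insertI2)
  show "greenR_in (sandwich a) z a" using R_intro[OF M_mult 1 2] by blast
qed

lemma Rhat_iff: "x \<in> Rhat \<longleftrightarrow> x \<in> P \<and> (\<exists>t\<in>sandwich a. a * x * t = a)"
  using Rhat_def R_M axM P_L by auto

lemma aRhat: "a \<in> Rhat" using Rhat_iff aP aM aa by metis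

lemma prefix:
  assumes x: "x \<in> Rhat" and y: "y \<in> P" and q: "q \<in> P" and xy: "x = y * q"
  shows "y \<in> Rhat \<and> greenR_in P y x"
proof -
  obtain t where t: "t \<in> sandwich a" "a * x * t = a" using x Rhat_iff by blast
  have ta: "t * a = t" "a * t = t" using t M_iff by auto
  have qa: "q * a = q" using q P_L by auto
  have ya: "y * a = y" using y P_L by auto
  have t': "a * q * t \<in> sandwich a" using M_iff ta aa by (metis mult.assoc)
  have "a * y * (a * q * t) = a" using t(2) xy ya by (metis mult.assoc)
  then have yR: "y \<in> Rhat" using Rhat_iff y t' by blast
  obtain s where s: "y = s * a * y" using P_s y by blast
  have "y = s * a * (a * y)" using s aa by (metis mult.assoc)
  also have "a * y = a * x * t * a * y" using t(2) aa by (metis mult.assoc)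
  finally have "y = (s * a * x) * (t * a * y)" by (simp add: mult.assoc aa2)
  also have "s * a * x = x" using s xy by (metis mult.assoc)
  finally have y2: "y = x * (t * a * y)" .
  have tay: "t * a * y \<in> P" using M_P M_mult t(1) aM y ya
    by (metis M_iff axM mult.assoc ta(1))
  have 1: "y \<in> insert x ((*) x ` P)" using y2 tay by (metis image_eqI insertI2)
  have 2: "x \<in> insert y ((*) y ` P)" using xy q by (metis image_eqI insertI2)
  have "greenR_in P y x" using R_intro[OF P_mult 1 2] by blast
  then show ?thesis using yR by blast
qed

lemma R_mem: "greenR_in P x y \<Longrightarrow> y \<in> insert x ((\<lambda>t. x * t) ` P)"
  unfolding greenR_in_def by blast

lemma cls_eq: "greenR_in P x y \<Longrightarrow> cls x = cls y"
  unfolding cls_def greenR_in_def by auto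

lemma cls_self: "x \<in> P \<Longrightarrow> x \<in> cls x"
  unfolding cls_def greenR_in_def by auto

lemma prefix': assumes "x \<in> Rhat" "y \<in> P" "x \<in> insert y ((\<lambda>t. y * t) ` P)"
  shows "y \<in> Rhat \<and> cls y = cls x"
proof -
  from assms(3) consider "x = y" | q where "q \<in> P" "x = y * q" by blast
  then show ?thesis
  proof cases
    case 1 then show ?thesis using assms by simp
  next
    case 2 then show ?thesis using prefix[OF assms(1,2) 2(1,2)] cls_eq by blast
  qed
qed

lemma cls_Rcls: assumes "x \<in> Rhat" shows "cls x \<in> Rcls"
proof -
  have xP: "x \<in> P" using assms Rhat_iff by auto
  have "cls x \<subseteq> Rhat"
  proof
    fix y assume "y \<in> cls x"
    then have "y \<in> P" "greenR_in P x y" unfolding cls_def by auto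
    then have "x \<in> insert y ((\<lambda>t. y * t) ` P)" unfolding greenR_in_def by blast
    then show "y \<in> Rhat" using prefix' assms \<open>y \<in> P\<close> by blast
  qed
  moreover have "cls x \<in> R_classes P" unfolding R_classes_def cls_def using xP by blast
  ultimately show ?thesis using Rcls_def by auto
qed

lemma idem_in_class:
  assumes "x0 \<in> Rhat" shows "\<exists>e. idem e \<and> e \<in> P \<and> greenR_in P x0 e"
proof -
  have x0: "x0 \<in> P" using assms Rhat_iff by auto
  obtain t where t: "t \<in> sandwich a" "a * x0 * t = a" using assms Rhat_iff by blast
  obtain s where s: "x0 = s * a * x0" using P_s x0 by blast
  have x0t: "x0 * t = s * a" using s t(2) by (metis mult.assoc)
  have asa: "a * (s * a) = a" using x0t t(2) by (simp add: mult.assoc)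
  have id: "idem (s * a)" unfolding idem_def using asa by (metis mult.assoc)
  have eL: "s * a \<in> leftmult a" unfolding leftmult_def by blast
  have eP: "s * a \<in> P" using idem_P id eL by blast
  have tP: "t \<in> P" using M_P t by blast
  have 1: "x0 \<in> insert (s * a) ((*) (s * a) ` P)" using s x0 by (metis image_eqI insertI2 mult.assoc)
  have 2: "s * a \<in> insert x0 ((*) x0 ` P)" using x0t tP by (metis image_eqI insertI2)
  have "greenR_in P x0 (s * a)" using R_intro[OF P_mult 1 2] by blast
  then show ?thesis using id eP by blast
qed

lemma Rcls_idem: assumes "C \<in> Rcls" shows "\<exists>e. e \<in> C \<and> idem e"
proof -
  have "C \<in> R_classes P" using assms Rcls_def by auto
  then obtain x0 where x0: "x0 \<in> P" "C = cls x0" unfolding R_classes_def cls_def by blast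
  have "x0 \<in> Rhat" using x0 cls_self assms Rcls_def by auto
  then obtain e where "idem e" "e \<in> P" "greenR_in P x0 e" using idem_in_class by blast
  then show ?thesis using x0 cls_def by auto
qed

abbreviation "T \<equiv> Egen (leftmult a)"
abbreviation "W \<equiv> Egen (sandwich a)"

lemma T_L: "T \<subseteq> leftmult a"
  unfolding Egen_def by (rule sgp_gen_sub) (auto intro: L_mult)

lemma T_P: "T \<subseteq> P"
  unfolding Egen_def by (rule sgp_gen_sub) (auto intro: P_mult idem_P)

lemma W_M: "W \<subseteq> sandwich a"
  unfolding Egen_def by (rule sgp_gen_sub) (auto intro: M_mult)

lemma W_T: "W \<subseteq> T"
  unfolding Egen_def using M_P P_def
  by (intro sgp_gen_mono) auto

lemma aW: "a \<in> W" unfolding Egen_def using aM a_idem by (auto intro: sgp_gen.base)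

lemma phiT: "z \<in> T \<Longrightarrow> a * z \<in> W"
  unfolding Egen_def
proof (induction z rule: sgp_gen.induct)
  case (base x)
  then have "x * a = x" "x * x = x" using L_iff idem_def by auto
  then have "idem (a * x)" "a * x \<in> sandwich a" using axM unfolding idem_def
    by (metis mult.assoc)+
  then show ?case by (auto intro: sgp_gen.base)
next
  case (mult x y)
  have "x * a = x" using mult.hyps(1) T_L L_iff unfolding Egen_def by auto
  moreover have "(a * x) * (a * y) = a * ((x * a) * y)" by (simp add: mult.assoc)
    ultimately have "a * (x * y) = (a * x) * (a * y)" by simp
  then show ?case using mult.IH by (auto intro: sgp_gen.mult)
qed

lemma W_unit: "w \<in> W \<Longrightarrow> w * t = a \<Longrightarrow> w = a"
  unfolding Egen_def
proof (induction w arbitrary: t rule: sgp_gen.induct)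
  case (base x)
  then have "x * a = x" "x * x = x" using M_iff idem_def by auto
  then show ?case using base.prems by (metis mult.assoc)
next
  case (mult x y)
  have "x = a" using mult.IH(1)[of "y * t"] mult.prems by (simp add: mult.assoc)
  have ya: "a * y = y" using mult.hyps(2) W_M M_iff unfolding Egen_def by auto
  have "y = a" using mult.IH(2)[of t] mult.prems \<open>x = a\<close> ya by simp
  then show ?case using \<open>x = a\<close> aa by simp
qed

lemma T_closed: "x \<in> T \<Longrightarrow> y \<in> T \<Longrightarrow> x * y \<in> T"
  unfolding Egen_def by (rule sgp_gen.mult)

lemma lower_gen:
  assumes X: "generates T X"
  defines "Z \<equiv> insert a ((\<lambda>x. a * x) ` (X - Rhat))"
  shows "generates W Z"
proof -
  have XT: "X \<subseteq> T" and sX: "sgp_gen X = T" using X generates_def by auto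
  have ZW: "Z \<subseteq> W" unfolding Z_def using aW phiT XT by auto
  have XR: "a * x = a" if xX: "x \<in> X" and xR: "x \<in> Rhat" for x
  proof -
    obtain t where t: "t \<in> sandwich a" "a * x * t = a" using xR Rhat_iff by blast
    have "x \<in> T" using XT xX by blast
    then have "a * x \<in> W" by (rule phiT)
    then show ?thesis using t(2) by (rule W_unit)
  qed
  have key: "a * z \<in> sgp_gen Z" if "z \<in> sgp_gen X" for z
    using that
  proof (induction z rule: sgp_gen.induct)
    case (base x)
    then show ?case using XR unfolding Z_def by (cases "x \<in> Rhat") (auto intro: sgp_gen.base)
  next
    case (mult x y)
    have "x * a = x" using mult.hyps(1) sX T_L L_iff by auto
    moreover have "(a * x) * (a * y) = a * ((x * a) * y)" by (simp add: mult.assoc)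
    ultimately have "a * (x * y) = (a * x) * (a * y)" by simp
    then show ?case using sgp_gen.mult[OF mult.IH] by simp
  qed
  have "W \<subseteq> sgp_gen Z"
  proof
    fix w assume w: "w \<in> W"
    then have "a * w = w" using W_M M_iff by auto
    moreover have "w \<in> sgp_gen X" using w W_T sX by auto
    ultimately show "w \<in> sgp_gen Z" using key by metis
  qed
  moreover have "sgp_gen Z \<subseteq> W" using ZW by (rule sgp_gen_sub) (unfold Egen_def, rule sgp_gen.mult)
  ultimately show ?thesis using ZW generates_def by blast
qed

lemma lower_card:
  assumes X: "generates T X"
  defines "Z \<equiv> insert a ((\<lambda>x. a * x) ` (X - Rhat))"
  shows "(card_of (Z <+> Rcls), card_of (X <+> (UNIV :: unit set))) \<in> ordLeq"
proof -
  have XT: "X \<subseteq> T" and sX: "sgp_gen X = T" using X generates_def by auto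
  define h where "h = (\<lambda>u. case u of Inl x \<Rightarrow> (if x \<in> Rhat then Inr (cls x) else Inl (a * x))
                                  | Inr (_::unit) \<Rightarrow> Inl a)"
  have "Z <+> Rcls \<subseteq> h ` (X <+> (UNIV :: unit set))"
  proof
    fix u assume "u \<in> Z <+> Rcls"
    then consider (l) z where "u = Inl z" "z \<in> Z" | (r) C where "u = Inr C" "C \<in> Rcls" by blast
    then show "u \<in> h ` (X <+> (UNIV :: unit set))"
    proof cases
      case l
      then show ?thesis
      proof (cases "z = a")
        case True then have "u = h (Inr ())" using l h_def by simp
        then show ?thesis by blast
      next
        case False
        then obtain x where "x \<in> X" "x \<notin> Rhat" "z = a * x" using l Z_def by auto
        then have "u = h (Inl x)" using l h_def by simp
        then show ?thesis using \<open>x \<in> X\<close> by blast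
      qed
    next
      case r
      obtain e where e: "e \<in> C" "idem e" using Rcls_idem r by blast
      have eR: "e \<in> Rhat" using e r Rcls_def by auto
      then have eP: "e \<in> P" using Rhat_iff by auto
      have "C \<in> R_classes P" using r Rcls_def by auto
      then obtain x0 where x0: "x0 \<in> P" "C = cls x0" unfolding R_classes_def cls_def by blast
      have Ce: "C = cls e" using x0 e cls_eq cls_def by auto
      have "e \<in> T" using e eP P_def unfolding Egen_def by (auto intro: sgp_gen.base)
      then obtain x where x: "x \<in> X" "e = x \<or> (\<exists>q\<in>sgp_gen X. e = x * q)"
        using sgp_gen_first sX by blast
      have xP: "x \<in> P" using x XT T_P by auto
      have "e \<in> insert x ((\<lambda>t. x * t) ` P)" using x sX T_P by auto
      then have "x \<in> Rhat \<and> cls x = cls e" using prefix' eR xP by blast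
      then have "u = h (Inl x)" using r Ce h_def by simp
      then show ?thesis using x by blast
    qed
  qed
  then have "(card_of (Z <+> Rcls), card_of (h ` (X <+> (UNIV :: unit set)))) \<in> ordLeq"
    by (rule card_of_mono1)
  then show ?thesis using card_of_image ordLeq_transitive by blast
qed

definition g where "g C = (SOME e. e \<in> C \<and> idem e)"

lemma g_prop: "C \<in> Rcls \<Longrightarrow> g C \<in> C \<and> idem (g C)"
  unfolding g_def using Rcls_idem by (rule someI_ex) 

lemma upper_gen:
  assumes Y: "generates W Y" and RI: "RI_dominated P"
  defines "X \<equiv> Y \<union> g ` (Rcls - {cls a})"
  shows "generates T X"
proof -
  have YW: "Y \<subseteq> W" and sY: "sgp_gen Y = W" using Y generates_def by auto
  have gT: "g C \<in> T" if "C \<in> Rcls" for C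
  proof -
    have "g C \<in> P" using g_prop[OF that] that Rcls_def Rhat_iff by auto
    then show ?thesis using g_prop[OF that] P_def unfolding Egen_def by (auto intro: sgp_gen.base)
  qed
  have XT: "X \<subseteq> T" unfolding X_def using YW W_T gT by auto
  have "{e \<in> leftmult a. idem e} \<subseteq> sgp_gen X"
  proof
    fix f assume f: "f \<in> {e \<in> leftmult a. idem e}"
    then have fP: "f \<in> P" using idem_P by auto
    obtain e where e: "e \<in> P" "\<forall>t\<in>P. t * e = t" "f \<in> insert e ((\<lambda>t. e * t) ` P)"
      using RI fP unfolding RI_dominated_def by blast
    have ee: "e * e = e" using e by auto
    have fe: "e * f = f" using e(3) ee by (auto simp: mult.assoc[symmetric])
    have ae: "a * e = a" using e aP by auto
    have eR: "e \<in> Rhat" using Rhat_iff e aM ae aa by metis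
    have afW: "a * f \<in> sgp_gen X"
    proof -
      have "f \<in> T" using f unfolding Egen_def by (auto intro: sgp_gen.base)
      then have "a * f \<in> sgp_gen Y" using phiT sY by auto
      then show ?thesis using sgp_gen_mono[of Y X] X_def by auto
    qed
    show "f \<in> sgp_gen X"
    proof (cases "cls e = cls a")
      case True
      then have "e \<in> cls a" using cls_self e by metis
      then have "e \<in> insert a ((\<lambda>t. a * t) ` P)" using R_mem cls_def by auto
      then have "a * e = e" using aa by (auto simp: mult.assoc[symmetric])
      then have "f = a * f" using fe by (metis mult.assoc)
      then show ?thesis using afW by simp
    next
      case False
      let ?C = "cls e"
      have C: "?C \<in> Rcls" using cls_Rcls eR by blast
      obtain gg where gg: "gg = g ?C" by blast
      have "gg \<in> ?C" "idem gg" using g_prop[OF C] gg by auto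
      then have "greenR_in P e gg" "gg * gg = gg" using cls_def idem_def by auto
      then have "cls gg = cls e" using cls_eq by auto
      then have "greenR_in P gg e" using cls_def cls_self e by auto
      then have "e \<in> insert gg ((\<lambda>t. gg * t) ` P)" by (rule R_mem)
      then have "gg * e = e" using \<open>gg * gg = gg\<close> by (auto simp: mult.assoc[symmetric])
      moreover have "gg * a = gg" using \<open>gg \<in> ?C\<close> cls_def P_L by auto
      ultimately have "f = gg * (a * f)" using fe by (metis mult.assoc)
      moreover have "gg \<in> X" using X_def gg C False by auto
      ultimately show ?thesis using afW by (metis sgp_gen.base sgp_gen.mult)
    qed
  qed
  then have "T \<subseteq> sgp_gen X" unfolding Egen_def by (rule sgp_gen_sub) (rule sgp_gen.mult)
  moreover have "sgp_gen X \<subseteq> T" using XT by (rule sgp_gen_sub) (rule T_closed)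
  ultimately show ?thesis using XT generates_def by blast
qed

lemma upper_card:
  fixes Y :: "'a set"
  defines "X \<equiv> Y \<union> g ` (Rcls - {cls a})"
  shows "(card_of (X <+> (UNIV :: unit set)), card_of (Y <+> Rcls)) \<in> ordLeq"
proof -
  define h where "h = (\<lambda>u. case u of Inl y \<Rightarrow> Inl y
                   | Inr C \<Rightarrow> (if C = cls a then Inr () else Inl (g C)))"
  have ca: "cls a \<in> Rcls" using cls_Rcls aRhat by blast
  have "X <+> (UNIV :: unit set) \<subseteq> h ` (Y <+> Rcls)"
  proof
    fix u assume "u \<in> X <+> (UNIV :: unit set)"
    then consider (l) z where "u = Inl z" "z \<in> X" | (r) "u = Inr ()" by (cases u) auto
    then show "u \<in> h ` (Y <+> Rcls)"
    proof cases
      case l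
      then show ?thesis
      proof (cases "z \<in> Y")
        case True then have "u = h (Inl z)" using l h_def by simp
        then show ?thesis using True by blast
      next
        case False
        then obtain C where "C \<in> Rcls" "C \<noteq> cls a" "z = g C" using l X_def by auto
        then have "u = h (Inr C)" using l h_def by simp
        then show ?thesis using \<open>C \<in> Rcls\<close> by blast
      qed
    next
      case r then have "u = h (Inr (cls a))" using h_def by simp
      then show ?thesis using ca by blast
    qed
  qed
  then have "(card_of (X <+> (UNIV :: unit set)), card_of (h ` (Y <+> Rcls))) \<in> ordLeq"
    by (rule card_of_mono1)
  then show ?thesis using card_of_image ordLeq_transitive by blast
qed

end

theorem theorem3p30:
  fixes a :: "'a::semigroup_mult"
  assumes a_idem: "idem a"
    and reg: "sandwich a \<subseteq> Reg"
  defines "P \<equiv> {x \<in> leftmult a. greenL x (a * x)}"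
  defines "Rhat \<equiv> {x \<in> P. greenR_in (sandwich a) (a * x) a}"
  defines "Rcls \<equiv> {C \<in> R_classes P. C \<subseteq> Rhat}"
  shows "(card_of (rank_set (Egen (sandwich a)) <+> Rcls),
          card_of (rank_set (Egen (leftmult a)) <+> (UNIV :: unit set))) \<in> ordLeq
       \<and> (card_of (idrank_set (Egen (sandwich a)) <+> Rcls),
          card_of (idrank_set (Egen (leftmult a)) <+> (UNIV :: unit set))) \<in> ordLeq
       \<and> (RI_dominated P \<longrightarrow>
           (card_of (rank_set (Egen (sandwich a)) <+> Rcls),
            card_of (rank_set (Egen (leftmult a)) <+> (UNIV :: unit set))) \<in> ordIso
         \<and> (card_of (idrank_set (Egen (sandwich a)) <+> Rcls),
            card_of (idrank_set (Egen (leftmult a)) <+> (UNIV :: unit set))) \<in> ordIso)"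
proof -
  interpret c: ctx3 a P Rhat Rcls
    using a_idem by unfold_locales (simp_all add: P_def Rhat_def Rcls_def)
  let ?T = "Egen (leftmult a)" and ?W = "Egen (sandwich a)"
  let ?U = "UNIV :: unit set"
  have genE: "generates (Egen A) {e \<in> A. idem e}" for A :: "'a set"
    unfolding generates_def Egen_def by (auto intro: sgp_gen.base)
  have genS: "generates (Egen A) (Egen A)" for A :: "'a set"
    unfolding generates_def using sgp_gen_closed_eq Egen_def by blast
  have rk: "generates (Egen A) (rank_set (Egen A)) \<and>
       (\<forall>Y. generates (Egen A) Y \<longrightarrow> (card_of (rank_set (Egen A)), card_of Y) \<in> ordLeq)" for A :: "'a set"
    unfolding rank_set_def by (rule someI_ex, rule min_exists) (use genS in blast)
  have idrk: "generates (Egen A) (idrank_set (Egen A)) \<and> (\<forall>x\<in>idrank_set (Egen A). idem x) \<and>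
       (\<forall>Y. generates (Egen A) Y \<and> (\<forall>y\<in>Y. idem y) \<longrightarrow> (card_of (idrank_set (Egen A)), card_of Y) \<in> ordLeq)" for A :: "'a set"
    unfolding idrank_set_def
  proof (rule someI_ex)
    show "\<exists>X. generates (Egen A) X \<and> (\<forall>x\<in>X. idem x) \<and>
       (\<forall>Y. generates (Egen A) Y \<and> (\<forall>y\<in>Y. idem y) \<longrightarrow> (card_of X, card_of Y) \<in> ordLeq)"
      using min_exists[of "\<lambda>X. generates (Egen A) X \<and> (\<forall>x\<in>X. idem x)"] genE by auto
  qed
  have lowidem: "\<forall>z\<in>insert a ((\<lambda>x. a * x) ` (X - Rhat)). idem z" if XI: "\<forall>x\<in>X. idem x" and XT: "X \<subseteq> ?T" for X
  proof
    fix z assume "z \<in> insert a ((\<lambda>x. a * x) ` (X - Rhat))"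
    then consider "z = a" | x where "x \<in> X" "z = a * x" by blast
    then show "idem z"
    proof cases
      case 1 then show ?thesis using a_idem by simp
    next
      case 2
      have "x \<in> leftmult a" using 2 XT c.T_L by blast
      then have "x * a = x" using c.L_iff by blast
      moreover have "x * x = x" using 2 XI idem_def by blast
      ultimately show ?thesis using 2 unfolding idem_def by (metis mult.assoc)
    qed
  qed
  have low: "(card_of (R <+> Rcls), card_of (XX <+> ?U)) \<in> ordLeq"
    if hX: "generates ?T XX" and R: "\<And>Z. generates ?W Z \<Longrightarrow> (I \<longrightarrow> (\<forall>z\<in>Z. idem z)) \<Longrightarrow> (card_of R, card_of Z) \<in> ordLeq"
      and XI: "I \<longrightarrow> (\<forall>z\<in>XX. idem z)" for R XX I
  proof -
    let ?Z = "insert a ((\<lambda>x. a * x) ` (XX - Rhat))"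
    have "generates ?W ?Z" using c.lower_gen hX by blast
    moreover have "I \<longrightarrow> (\<forall>z\<in>?Z. idem z)" using lowidem XI hX generates_def by blast
    ultimately have "(card_of R, card_of ?Z) \<in> ordLeq" using R by blast
    then have "(card_of (R <+> Rcls), card_of (?Z <+> Rcls)) \<in> ordLeq" by (rule card_of_Plus_mono1)
    then show ?thesis using c.lower_card[OF hX] ordLeq_transitive by blast
  qed
  have up: "(card_of (R <+> ?U), card_of (Y <+> Rcls)) \<in> ordLeq"
    if Y: "generates ?W Y" and RI: "RI_dominated P"
      and R: "\<And>XX. generates ?T XX \<Longrightarrow> (I \<longrightarrow> (\<forall>z\<in>XX. idem z)) \<Longrightarrow> (card_of R, card_of XX) \<in> ordLeq"
      and YI: "I \<longrightarrow> (\<forall>z\<in>Y. idem z)" for R Y I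
  proof -
    let ?XX = "Y \<union> c.g ` (Rcls - {c.cls a})"
    have "generates ?T ?XX" using c.upper_gen Y RI by blast
    moreover have "I \<longrightarrow> (\<forall>z\<in>?XX. idem z)" using YI c.g_prop by auto
    ultimately have "(card_of R, card_of ?XX) \<in> ordLeq" using R by blast
    then have "(card_of (R <+> ?U), card_of (?XX <+> ?U)) \<in> ordLeq" by (rule card_of_Plus_mono1)
    then show ?thesis using c.upper_card ordLeq_transitive by blast
  qed
  have 1: "(card_of (rank_set ?W <+> Rcls), card_of (rank_set ?T <+> ?U)) \<in> ordLeq"
  proof (rule low)
    show "generates ?T (rank_set ?T)" using rk by blast
    fix Z assume "generates ?W Z" "False \<longrightarrow> (\<forall>z\<in>Z. idem z)"
    then show "(card_of (rank_set ?W), card_of Z) \<in> ordLeq" using rk by blast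
  qed simp
  have 2: "(card_of (idrank_set ?W <+> Rcls), card_of (idrank_set ?T <+> ?U)) \<in> ordLeq"
  proof (rule low)
    show "generates ?T (idrank_set ?T)" using idrk by blast
    fix Z assume "generates ?W Z" "True \<longrightarrow> (\<forall>z\<in>Z. idem z)"
    then show "(card_of (idrank_set ?W), card_of Z) \<in> ordLeq" using idrk by blast
  next
    show "True \<longrightarrow> (\<forall>z\<in>idrank_set ?T. idem z)" using idrk by blast
  qed
  have 3: "(card_of (rank_set ?T <+> ?U), card_of (rank_set ?W <+> Rcls)) \<in> ordLeq"
    if RI: "RI_dominated P"
  proof (rule up)
    show "generates ?W (rank_set ?W)" using rk by blast
    show "RI_dominated P" by (rule RI)
    fix Z assume "generates ?T Z" "False \<longrightarrow> (\<forall>z\<in>Z. idem z)"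
    then show "(card_of (rank_set ?T), card_of Z) \<in> ordLeq" using rk by blast
  qed simp
  have 4: "(card_of (idrank_set ?T <+> ?U), card_of (idrank_set ?W <+> Rcls)) \<in> ordLeq"
    if RI: "RI_dominated P"
  proof (rule up)
    show "generates ?W (idrank_set ?W)" using idrk by blast
    show "RI_dominated P" by (rule RI)
    fix Z assume "generates ?T Z" "True \<longrightarrow> (\<forall>z\<in>Z. idem z)"
    then show "(card_of (idrank_set ?T), card_of Z) \<in> ordLeq" using idrk by blast
  next
    show "True \<longrightarrow> (\<forall>z\<in>idrank_set ?W. idem z)" using idrk by blast
  qed
  show ?thesis using 1 2 3 4 ordIso_iff_ordLeq by blast
qed

end
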